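(* Let $\mathcal{X}=\{1,\dots,n\}$, let $\pi$ be a strictly positive probability distribution on $\mathcal{X}$, let $P$ be a $\pi$-reversible transition matrix, let $G$ be the Gibbs kernel induced by a partition $\mathcal{X}=\bigsqcup_{i=1}^k\mathcal{O}_i$, and let $A=\frac12(P+G)$. Then $$\|A-\Pi\|_{F,\pi}^2=\tfrac14\operatorname{Tr}(P^2)+\tfrac12\operatorname{Tr}(\overline{P})+\tfrac{k}{4}-1.$$
   Context: $\pi$-reversible means $\pi(x)P(x,y)=\pi(y)P(y,x)$ for all $x,y$. The Gibbs kernel is $G(x,y)=\pi(y)/\pi(\mathcal{O}(x))$ if $y\in\mathcal{O}(x)$ and $0$ otherwise, where $\mathcal{O}(x)$ is the block containing $x$ and $\pi(\mathcal{O})=\sum_{z\in\mathcal{O}}\pi(z)$. $\overline{P}(i,j)=\frac{1}{\pi(\mathcal{O}_i)}\sum_{x\in\mathcal{O}_i,\,y\in\mathcal{O}_j}\pi(x)P(x,y)$ is the projection chain. $\Pi$ is the matrix with every row equal to $\pi$. $\|M\|_{F,\pi}^2=\operatorname{Tr}(M^*M)$ with $M^*(x,y)=\pi(y)M(y,x)/\pi(x)$. *)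

theory Defs
  imports Complex_Main "HOL-Library.Disjoint_Sets"
begin

definition prob_dist_pos :: "('x::finite \<Rightarrow> real) \<Rightarrow> bool" where
  "prob_dist_pos \<pi> \<longleftrightarrow> (\<forall>x. \<pi> x > 0) \<and> (\<Sum>x\<in>UNIV. \<pi> x) = 1"

definition stochastic :: "('x::finite \<Rightarrow> 'x \<Rightarrow> real) \<Rightarrow> bool" where
  "stochastic P \<longleftrightarrow> (\<forall>x y. P x y \<ge> 0) \<and> (\<forall>x. (\<Sum>y\<in>UNIV. P x y) = 1)"

definition reversible :: "('x \<Rightarrow> real) \<Rightarrow> ('x \<Rightarrow> 'x \<Rightarrow> real) \<Rightarrow> bool" where
  "reversible \<pi> P \<longleftrightarrow> (\<forall>x y. \<pi> x * P x y = \<pi> y * P y x)"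

definition block :: "'x set set \<Rightarrow> 'x \<Rightarrow> 'x set" where
  "block \<O> x = (THE B. B \<in> \<O> \<and> x \<in> B)"

definition gibbs :: "('x \<Rightarrow> real) \<Rightarrow> 'x set set \<Rightarrow> 'x \<Rightarrow> 'x \<Rightarrow> real" where
  "gibbs \<pi> \<O> x y = (if y \<in> block \<O> x then \<pi> y / (\<Sum>z\<in>block \<O> x. \<pi> z) else 0)"

definition proj_chain :: "('x \<Rightarrow> real) \<Rightarrow> ('x \<Rightarrow> 'x \<Rightarrow> real) \<Rightarrow> 'x set \<Rightarrow> 'x set \<Rightarrow> real" where
  "proj_chain \<pi> P B C = (1 / (\<Sum>z\<in>B. \<pi> z)) * (\<Sum>x\<in>B. \<Sum>y\<in>C. \<pi> x * P x y)"

definition mtrace :: "('x::finite \<Rightarrow> 'x \<Rightarrow> real) \<Rightarrow> real" where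
  "mtrace M = (\<Sum>x\<in>UNIV. M x x)"

definition mmult :: "('x::finite \<Rightarrow> 'x \<Rightarrow> real) \<Rightarrow> ('x \<Rightarrow> 'x \<Rightarrow> real) \<Rightarrow> 'x \<Rightarrow> 'x \<Rightarrow> real" where
  "mmult M N x y = (\<Sum>z\<in>UNIV. M x z * N z y)"

definition adjoint_pi :: "('x \<Rightarrow> real) \<Rightarrow> ('x \<Rightarrow> 'x \<Rightarrow> real) \<Rightarrow> 'x \<Rightarrow> 'x \<Rightarrow> real" where
  "adjoint_pi \<pi> M x y = \<pi> y * M y x / \<pi> x"

definition frob_sq_pi :: "('x::finite \<Rightarrow> real) \<Rightarrow> ('x \<Rightarrow> 'x \<Rightarrow> real) \<Rightarrow> real" where
  "frob_sq_pi \<pi> M = mtrace (mmult (adjoint_pi \<pi> M) M)"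

definition Pi_mat :: "('x \<Rightarrow> real) \<Rightarrow> 'x \<Rightarrow> 'x \<Rightarrow> real" where
  "Pi_mat \<pi> x y = \<pi> y"

end

theory Submission
  imports Defs
begin

lemma block_ex1:
  assumes "partition_on UNIV \<O>"
  shows "\<exists>!B. B \<in> \<O> \<and> x \<in> B"
proof -
  have "x \<in> \<Union>\<O>" using partition_onD1[OF assms] by auto
  then obtain B where B: "B \<in> \<O>" "x \<in> B" by auto
  moreover have "C = B" if "C \<in> \<O>" "x \<in> C" for C
    using partition_onD2[OF assms] B that unfolding disjoint_def by blast
  ultimately show ?thesis by blast
qed

lemma block_in:
  assumes "partition_on UNIV \<O>"
  shows "block \<O> x \<in> \<O> \<and> x \<in> block \<O> x"
  unfolding block_def by (rule theI'[OF block_ex1[OF assms]])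

lemma block_eq:
  assumes "partition_on UNIV \<O>" "B \<in> \<O>" "x \<in> B"
  shows "block \<O> x = B"
  using block_ex1[OF assms(1), of x] block_in[OF assms(1), of x] assms by blast

lemma sum_part:
  fixes f :: "'x::finite \<Rightarrow> real"
  assumes "partition_on UNIV \<O>"
  shows "(\<Sum>x\<in>UNIV. f x) = (\<Sum>B\<in>\<O>. \<Sum>x\<in>B. f x)"
proof -
  have "UNIV = \<Union>\<O>" using partition_onD1[OF assms] by auto
  then have "(\<Sum>x\<in>UNIV. f x) = (\<Sum>x\<in>\<Union>\<O>. f x)" by simp
  also have "\<dots> = (\<Sum>B\<in>\<O>. \<Sum>x\<in>B. f x)"
    using partition_onD2[OF assms]
    by (subst sum.Union_disjoint) (auto simp: disjoint_def)
  finally show ?thesis .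
qed

theorem corollary4p3:
  fixes \<pi> :: "'x::finite \<Rightarrow> real" and P :: "'x \<Rightarrow> 'x \<Rightarrow> real" and \<O> :: "'x set set"
  assumes "prob_dist_pos \<pi>"
    and "stochastic P"
    and "reversible \<pi> P"
    and "partition_on UNIV \<O>"
  shows "frob_sq_pi \<pi> (\<lambda>x y. (1/2) * (P x y + gibbs \<pi> \<O> x y) - Pi_mat \<pi> x y)
         = (1/4) * mtrace (mmult P P) + (1/2) * (\<Sum>B\<in>\<O>. proj_chain \<pi> P B B)
           + real (card \<O>) / 4 - 1"
proof -
  have pos: "\<And>x. \<pi> x > 0" and s1: "(\<Sum>x\<in>UNIV. \<pi> x) = 1"
    using assms(1) by (auto simp: prob_dist_pos_def)
  have pne: "\<And>x. \<pi> x \<noteq> 0" using pos by (metis less_irrefl)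
  have Ps: "\<And>x. (\<Sum>y\<in>UNIV. P x y) = 1" using assms(2) by (auto simp: stochastic_def)
  have rev: "\<And>x y. \<pi> x * P x y = \<pi> y * P y x" using assms(3) by (auto simp: reversible_def)
  define G where "G = gibbs \<pi> \<O>"
  define S where "S = (\<lambda>B. \<Sum>z\<in>B. \<pi> z)"
  have Bin: "\<And>x. block \<O> x \<in> \<O> \<and> x \<in> block \<O> x" using block_in[OF assms(4)] .
  have Spos: "S B > 0" if "x \<in> B" for x B
  proof -
    have "S B \<ge> \<pi> x" unfolding S_def
      using that pos by (intro member_le_sum) (auto simp: less_imp_le)
    thus ?thesis using pos[of x] by linarith
  qed
  have Gdef: "G x y = (if y \<in> block \<O> x then \<pi> y / S (block \<O> x) else 0)" for x y
    unfolding G_def gibbs_def S_def by simp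
  have Gs: "(\<Sum>y\<in>UNIV. G x y) = 1" for x
  proof -
    have "(\<Sum>y\<in>UNIV. G x y) = (\<Sum>y\<in>block \<O> x. \<pi> y / S (block \<O> x))"
      unfolding Gdef by (simp add: sum.If_cases)
    also have "\<dots> = S (block \<O> x) / S (block \<O> x)"
      unfolding S_def by (rule sum_divide_distrib[symmetric])
    also have "\<dots> = 1" using Spos[of x "block \<O> x"] Bin by simp
    finally show ?thesis .
  qed
  define M where "M = (\<lambda>x y. (1/2) * (P x y + G x y) - Pi_mat \<pi> x y)"
  have frob: "frob_sq_pi \<pi> M = (\<Sum>x\<in>UNIV. \<Sum>y\<in>UNIV. \<pi> x / \<pi> y * (M x y)^2)"
  proof -
    have "frob_sq_pi \<pi> M = (\<Sum>y\<in>UNIV. \<Sum>x\<in>UNIV. \<pi> x * M x y / \<pi> y * M x y)"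
      unfolding frob_sq_pi_def mtrace_def mmult_def adjoint_pi_def by simp
    also have "\<dots> = (\<Sum>x\<in>UNIV. \<Sum>y\<in>UNIV. \<pi> x * M x y / \<pi> y * M x y)"
      by (rule sum.swap)
    finally show ?thesis by (simp add: power2_eq_square algebra_simps)
  qed
  have pw: "\<pi> x / \<pi> y * (M x y)^2 = 1/4 * (P x y * P y x) + 1/2 * (\<pi> x / \<pi> y * P x y * G x y)
     + 1/4 * (\<pi> x / \<pi> y * (G x y)^2) - \<pi> x * (P x y + G x y) + \<pi> x * \<pi> y" for x y
  proof -
    have "\<pi> x / \<pi> y * P x y * P x y = P x y * P y x"
      using rev[of x y] pos[of y] by (simp add: field_simps)
    moreover have "\<pi> x / \<pi> y * (\<pi> y * (P x y + G x y)) = \<pi> x * (P x y + G x y)"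
      using pos[of y] by (simp add: field_simps)
    moreover have "\<pi> x / \<pi> y * (\<pi> y * \<pi> y) = \<pi> x * \<pi> y"
      using pos[of y] by (simp add: field_simps)
    ultimately show ?thesis unfolding M_def Pi_mat_def
      by (simp add: power2_eq_square algebra_simps)
  qed
  have T1: "(\<Sum>x\<in>UNIV. \<Sum>y\<in>UNIV. P x y * P y x) = mtrace (mmult P P)"
    unfolding mtrace_def mmult_def by simp
  have T2: "(\<Sum>x\<in>UNIV. \<Sum>y\<in>UNIV. \<pi> x / \<pi> y * P x y * G x y) = (\<Sum>B\<in>\<O>. proj_chain \<pi> P B B)"
  proof -
    have "(\<Sum>x\<in>UNIV. \<Sum>y\<in>UNIV. \<pi> x / \<pi> y * P x y * G x y)
        = (\<Sum>x\<in>UNIV. \<Sum>y\<in>block \<O> x. \<pi> x * P x y / S (block \<O> x))"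
    proof (rule sum.cong[OF refl])
      fix x
      have "(\<Sum>y\<in>UNIV. \<pi> x / \<pi> y * P x y * G x y)
          = (\<Sum>y\<in>UNIV. if y \<in> block \<O> x then \<pi> x * P x y / S (block \<O> x) else 0)"
        using pos by (intro sum.cong) (auto simp: Gdef field_simps pne)
      thus "(\<Sum>y\<in>UNIV. \<pi> x / \<pi> y * P x y * G x y)
          = (\<Sum>y\<in>block \<O> x. \<pi> x * P x y / S (block \<O> x))"
        by (simp add: sum.If_cases)
    qed
    also have "\<dots> = (\<Sum>B\<in>\<O>. \<Sum>x\<in>B. \<Sum>y\<in>block \<O> x. \<pi> x * P x y / S (block \<O> x))"
      by (rule sum_part[OF assms(4)])
    also have "\<dots> = (\<Sum>B\<in>\<O>. proj_chain \<pi> P B B)"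
    proof (rule sum.cong[OF refl])
      fix B assume B: "B \<in> \<O>"
      have "(\<Sum>x\<in>B. \<Sum>y\<in>block \<O> x. \<pi> x * P x y / S (block \<O> x))
          = (\<Sum>x\<in>B. \<Sum>y\<in>B. \<pi> x * P x y / S B)"
        using block_eq[OF assms(4) B] by simp
      also have "\<dots> = proj_chain \<pi> P B B"
        unfolding proj_chain_def S_def by (simp add: sum_divide_distrib)
      finally show "(\<Sum>x\<in>B. \<Sum>y\<in>block \<O> x. \<pi> x * P x y / S (block \<O> x)) = proj_chain \<pi> P B B" .
    qed
    finally show ?thesis .
  qed
  have T3: "(\<Sum>x\<in>UNIV. \<Sum>y\<in>UNIV. \<pi> x / \<pi> y * (G x y)^2) = real (card \<O>)"
  proof -
    have "(\<Sum>x\<in>UNIV. \<Sum>y\<in>UNIV. \<pi> x / \<pi> y * (G x y)^2) = (\<Sum>x\<in>UNIV. \<pi> x / S (block \<O> x))"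
    proof (rule sum.cong[OF refl])
      fix x
      have SB: "S (block \<O> x) > 0" using Spos Bin by blast
      have "(\<Sum>y\<in>UNIV. \<pi> x / \<pi> y * (G x y)^2)
          = (\<Sum>y\<in>UNIV. if y \<in> block \<O> x then \<pi> x * \<pi> y / (S (block \<O> x))^2 else 0)"
        using pos by (intro sum.cong) (auto simp: Gdef field_simps pne power2_eq_square)
      also have "\<dots> = (\<Sum>y\<in>block \<O> x. \<pi> x * \<pi> y / (S (block \<O> x))^2)"
        by (simp add: sum.If_cases)
      also have "\<dots> = \<pi> x * S (block \<O> x) / (S (block \<O> x))^2"
        unfolding S_def by (simp add: sum_divide_distrib sum_distrib_left)
      also have "\<dots> = \<pi> x / S (block \<O> x)" using SB by (simp add: power2_eq_square)
      finally show "(\<Sum>y\<in>UNIV. \<pi> x / \<pi> y * (G x y)^2) = \<pi> x / S (block \<O> x)" .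
    qed
    also have "\<dots> = (\<Sum>B\<in>\<O>. \<Sum>x\<in>B. \<pi> x / S (block \<O> x))"
      by (rule sum_part[OF assms(4)])
    also have "\<dots> = (\<Sum>B\<in>\<O>. 1)"
    proof (rule sum.cong[OF refl])
      fix B assume B: "B \<in> \<O>"
      have ne: "B \<noteq> {}" using partition_onD3[OF assms(4)] B by auto
      then obtain x where "x \<in> B" by auto
      hence SB: "S B > 0" by (rule Spos)
      have "(\<Sum>x\<in>B. \<pi> x / S (block \<O> x)) = (\<Sum>x\<in>B. \<pi> x / S B)"
        using block_eq[OF assms(4) B] by simp
      also have "\<dots> = S B / S B" unfolding S_def by (rule sum_divide_distrib[symmetric])
      also have "\<dots> = 1" using SB by simp
      finally show "(\<Sum>x\<in>B. \<pi> x / S (block \<O> x)) = 1" .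
    qed
    finally show ?thesis by simp
  qed
  have T4: "(\<Sum>x\<in>UNIV. \<Sum>y\<in>UNIV. \<pi> x * (P x y + G x y)) = 2"
  proof -
    have "(\<Sum>x\<in>UNIV. \<Sum>y\<in>UNIV. \<pi> x * (P x y + G x y)) = (\<Sum>x\<in>UNIV. 2 * \<pi> x)"
    proof (rule sum.cong[OF refl])
      fix x
      have "(\<Sum>y\<in>UNIV. \<pi> x * (P x y + G x y)) = \<pi> x * ((\<Sum>y\<in>UNIV. P x y) + (\<Sum>y\<in>UNIV. G x y))"
        by (simp add: sum_distrib_left[symmetric] sum.distrib)
      thus "(\<Sum>y\<in>UNIV. \<pi> x * (P x y + G x y)) = 2 * \<pi> x" by (simp add: Ps Gs)
    qed
    also have "\<dots> = 2 * (\<Sum>x\<in>UNIV. \<pi> x)" by (rule sum_distrib_left[symmetric])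
    also have "\<dots> = 2" by (simp add: s1)
    finally show ?thesis .
  qed
  have T5: "(\<Sum>x\<in>UNIV. \<Sum>y\<in>UNIV. \<pi> x * \<pi> y) = 1"
    by (simp add: sum_distrib_left[symmetric] sum_distrib_right[symmetric] s1)
  have "frob_sq_pi \<pi> M = 1/4 * (\<Sum>x\<in>UNIV. \<Sum>y\<in>UNIV. P x y * P y x)
      + 1/2 * (\<Sum>x\<in>UNIV. \<Sum>y\<in>UNIV. \<pi> x / \<pi> y * P x y * G x y)
      + 1/4 * (\<Sum>x\<in>UNIV. \<Sum>y\<in>UNIV. \<pi> x / \<pi> y * (G x y)^2)
      - (\<Sum>x\<in>UNIV. \<Sum>y\<in>UNIV. \<pi> x * (P x y + G x y))
      + (\<Sum>x\<in>UNIV. \<Sum>y\<in>UNIV. \<pi> x * \<pi> y)"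
    unfolding frob pw by (simp add: sum.distrib sum_subtractf sum_distrib_left)
  also have "\<dots> = (1/4) * mtrace (mmult P P) + (1/2) * (\<Sum>B\<in>\<O>. proj_chain \<pi> P B B)
           + real (card \<O>) / 4 - 1"
    unfolding T1 T2 T3 T4 T5 by simp
  finally show ?thesis unfolding M_def G_def .
qed

end
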